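(* For every real $r\ge1$ and every $x\in[0,1]$, \[ \sum_{m\ge0}s_m(x)^r\ \ge\ \sum_{m\ge0}s_m(\tfrac12)^r, \] where $s_m(\tfrac12)=\frac{8}{\pi^2(2m+1)^2}$.
   Context: For $y\in\mathbb{R}$ let $\operatorname{sinc}(y)=\frac{\sin y}{y}$ for $y\neq0$ and $\operatorname{sinc}(0)=1$, and let $h(y)=\operatorname{sinc}^2(\pi y)$. For integers $m\ge0$, $s_m(x)=h(x+m)+h(x-(m+1))$. *)

theory Defs
  imports "HOL-Analysis.Analysis"
begin

definition sinc :: "real \<Rightarrow> real" where
  "sinc y = (if y = 0 then 1 else sin y / y)"

definition h :: "real \<Rightarrow> real" where
  "h y = (sinc (pi * y))\<^sup>2"

definition s :: "nat \<Rightarrow> real \<Rightarrow> real" where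
  "s m x = h (x + real m) + h (x - (real m + 1))"

end

theory Submission
  imports Defs
begin


lemma gamma_refl_real:
  fixes x :: real assumes "0 < x" "x < 1"
  shows "Gamma x * Gamma (1 - x) = pi / sin (pi * x)"
proof -
  have "Gamma (complex_of_real x) * Gamma (1 - complex_of_real x) = of_real pi / sin (of_real pi * of_real x)"
    by (rule Gamma_reflection_complex)
  hence "complex_of_real (Gamma x * Gamma (1 - x)) = complex_of_real (pi / sin (pi * x))"
    by (simp flip: Gamma_complex_of_real sin_of_real)
  thus ?thesis using of_real_eq_iff by blast
qed

lemma pos_not_nonpos_Int: "(x::real) > 0 \<Longrightarrow> x \<notin> \<int>\<^sub>\<le>\<^sub>0"
  by (auto elim!: nonpos_Ints_cases)

lemma sin_pi_pos: "0 < (x::real) \<Longrightarrow> x < 1 \<Longrightarrow> sin (pi * x) > 0"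
  by (rule sin_gt_zero) auto

lemma digamma_refl_real:
  fixes x :: real assumes x: "0 < x" "x < 1"
  shows "Digamma x - Digamma (1 - x) = - pi * cos (pi * x) / sin (pi * x)"
proof -
  define F where "F t = Gamma t * Gamma (1 - t)" for t :: real
  define G where "G t = pi / sin (pi * t)" for t :: real
  have x1: "x \<notin> \<int>\<^sub>\<le>\<^sub>0" "1 - x \<notin> \<int>\<^sub>\<le>\<^sub>0" using x by (auto intro!: pos_not_nonpos_Int)
  have sx: "sin (pi * x) > 0" using sin_pi_pos x by auto
  have dF: "(F has_real_derivative (Gamma x * Digamma x * Gamma (1 - x) - Gamma x * (Gamma (1 - x) * Digamma (1 - x)))) (at x)"
    unfolding F_def using x1
    by (auto intro!: derivative_eq_intros)
  have dG: "(G has_real_derivative (- (pi * (cos (pi * x) * pi)) / (sin (pi * x))^2)) (at x)"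
    unfolding G_def using sx
    by (auto intro!: derivative_eq_intros simp: power2_eq_square)
  have dG': "(G has_real_derivative (Gamma x * Digamma x * Gamma (1 - x) - Gamma x * (Gamma (1 - x) * Digamma (1 - x)))) (at x)"
    by (rule has_field_derivative_transform_within_open[OF dF, of "{0<..<1}"])
       (use x in \<open>auto simp: F_def G_def gamma_refl_real\<close>)
  have eq: "Gamma x * Digamma x * Gamma (1 - x) - Gamma x * (Gamma (1 - x) * Digamma (1 - x))
      = - (pi * (cos (pi * x) * pi)) / (sin (pi * x))^2"
    using DERIV_unique[OF dG' dG] .
  hence "(pi / sin (pi * x)) * (Digamma x - Digamma (1 - x)) = - (pi * (cos (pi * x) * pi)) / (sin (pi * x))^2"
    by (simp add: gamma_refl_real[OF x, symmetric] algebra_simps)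
  hence "pi * sin (pi * x) * (pi * cos (pi * x) + sin (pi * x) * (Digamma x - Digamma (1 - x))) = 0"
    using sx by (simp add: field_simps power2_eq_square)
  hence "pi * cos (pi * x) + sin (pi * x) * (Digamma x - Digamma (1 - x)) = 0"
    using sx pi_gt_zero by simp
  thus ?thesis using sx by (simp add: field_simps)
qed

lemma trigamma_refl_real:
  fixes x :: real assumes x: "0 < x" "x < 1"
  shows "Polygamma 1 x + Polygamma 1 (1 - x) = pi^2 / (sin (pi * x))^2"
proof -
  define F where "F t = Digamma t - Digamma (1 - t)" for t :: real
  define G where "G t = - pi * cos (pi * t) / sin (pi * t)" for t :: real
  have x1: "x \<notin> \<int>\<^sub>\<le>\<^sub>0" "1 - x \<notin> \<int>\<^sub>\<le>\<^sub>0" using x by (auto intro!: pos_not_nonpos_Int)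
  have sx: "sin (pi * x) > 0" using sin_pi_pos x by auto
  have dF: "(F has_real_derivative (Polygamma 1 x + Polygamma 1 (1 - x))) (at x)"
    unfolding F_def using x1
    by (auto intro!: derivative_eq_intros)
  have dG: "(G has_real_derivative (pi^2 / (sin (pi * x))^2)) (at x)"
    unfolding G_def using sx
    apply (auto intro!: derivative_eq_intros)
    apply (simp add: field_simps power2_eq_square)
    using sin_cos_squared_add[of "pi*x"] unfolding power2_eq_square by algebra
  have dG': "(G has_real_derivative (Polygamma 1 x + Polygamma 1 (1 - x))) (at x)"
    by (rule has_field_derivative_transform_within_open[OF dF, of "{0<..<1}"])
       (use x in \<open>auto simp: F_def G_def digamma_refl_real\<close>)
  show ?thesis using DERIV_unique[OF dG' dG] .
qed

lemma trigamma_sums: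
  fixes x :: real assumes "x > 0"
  shows "(\<lambda>k. 1 / (x + real k)^2) sums Polygamma 1 x"
  using Polygamma_LIMSEQ[of x 1] assms by (simp add: inverse_eq_divide power2_eq_square)

lemma h_formula: "y \<noteq> 0 \<Longrightarrow> h y = (sin (pi * y))^2 / (pi^2 * y^2)"
  by (simp add: h_def sinc_def power_divide power_mult_distrib)

lemma h_nonneg: "h y \<ge> 0"
  by (simp add: h_def)

lemma sin_sq_plus: "(sin (pi * (x + real m)))^2 = (sin (pi * x))^2"
proof -
  have "sin (pi * (x + real m)) = sin (pi * x + real m * pi)" by (simp add: algebra_simps)
  also have "\<dots> = sin (pi * x) * (-1)^m" by (simp add: sin_add cos_npi sin_npi)
  finally show ?thesis by (simp add: power_mult_distrib flip: power_mult)
qed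

lemma sin_sq_minus: "(sin (pi * (x - (real m + 1))))^2 = (sin (pi * x))^2"
proof -
  have "sin (pi * (x - (real m + 1))) = sin (pi * x - real (Suc m) * pi)" by (simp add: algebra_simps)
  also have "\<dots> = sin (pi * x) * (-1)^(Suc m)" by (simp add: sin_diff cos_npi sin_npi del: of_nat_Suc)
  finally show ?thesis by (simp add: power_mult_distrib flip: power_mult)
qed

lemma s_formula:
  assumes "0 \<le> x" "x \<le> 1" "m \<ge> 1 \<or> (0 < x \<and> x < 1)"
  shows "s m x = (sin (pi * x))^2 / pi^2 * (1 / (x + real m)^2 + 1 / (1 - x + real m)^2)"
proof -
  have n1: "x + real m \<noteq> 0" and n2: "x - (real m + 1) \<noteq> 0" using assms by auto
  have e: "(x - (real m + 1))^2 = (1 - x + real m)^2" by (simp add: power2_eq_square algebra_simps)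
  show ?thesis
    unfolding s_def h_formula[OF n1] h_formula[OF n2] sin_sq_plus sin_sq_minus e
    by (simp add: field_simps)
qed

lemma s_half: "s m (1/2) = 8 / (pi^2 * (2 * real m + 1)^2)"
proof -
  have "s m (1/2) = (sin (pi * (1/2)))^2 / pi^2 * (1 / (1/2 + real m)^2 + 1 / (1 - 1/2 + real m)^2)"
    by (rule s_formula) auto
  also have "\<dots> = 8 / (pi^2 * (2 * real m + 1)^2)"
    by (simp add: field_simps power2_eq_square)
  finally show ?thesis .
qed

lemma s_nonneg: "s m x \<ge> 0"
  unfolding s_def using h_nonneg by (simp add: add_nonneg_nonneg)

lemma s_sums_interior:
  assumes x: "0 < x" "x < 1"
  shows "(\<lambda>m. s m x) sums 1"
proof -
  have sx: "sin (pi * x) > 0" using sin_pi_pos x by auto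
  have "(\<lambda>m. 1 / (x + real m)^2 + 1 / ((1 - x) + real m)^2) sums (Polygamma 1 x + Polygamma 1 (1 - x))"
    using x by (intro sums_add trigamma_sums) auto
  hence "(\<lambda>m. (sin (pi * x))^2 / pi^2 * (1 / (x + real m)^2 + 1 / ((1 - x) + real m)^2))
      sums ((sin (pi * x))^2 / pi^2 * (Polygamma 1 x + Polygamma 1 (1 - x)))"
    by (rule sums_mult)
  also have "(sin (pi * x))^2 / pi^2 * (Polygamma 1 x + Polygamma 1 (1 - x)) = 1"
    using sx by (subst trigamma_refl_real[OF x]) simp
  finally show ?thesis
    using s_formula[of x] x by (simp add: algebra_simps)
qed

lemma s_endpoint:
  assumes "x = 0 \<or> x = 1"
  shows "s m x = (if m = 0 then 1 else 0)"
proof -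
  have "\<And>m. pi + pi * real m \<noteq> 0"
    by (smt (verit) pi_gt_zero mult_nonneg_nonneg of_nat_0_le_iff)
  thus ?thesis using assms
  by (auto simp: s_def h_def sinc_def sin_npi algebra_simps
      simp flip: of_nat_Suc)
qed


lemma sin_lower: fixes y :: real assumes "0 \<le> y" shows "y - y^3/6 \<le> sin y"
proof -
  have "\<bar>sin y - (\<Sum>m<3. sin_coeff m * y ^ m)\<bar> \<le> inverse (fact 3) * \<bar>y\<bar> ^ 3"
    by (rule Maclaurin_sin_bound)
  hence "\<bar>sin y - y\<bar> \<le> y^3/6"
    using assms by (simp add: eval_nat_numeral sin_coeff_def)
  thus ?thesis using abs_ge_minus_self[of "sin y - y"] by linarith
qed

lemma pi_poly: "pi * (1 - pi^2/24) \<ge> 4/3"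
proof -
  have "(4 - pi) * (pi^2 + 4*pi - 8) \<ge> 0"
  proof (intro mult_nonneg_nonneg)
    show "0 \<le> 4 - pi" using pi_less_4 by simp
    have "0 \<le> pi^2" by simp
    thus "0 \<le> pi^2 + 4*pi - 8" using pi_gt3 by linarith
  qed
  thus ?thesis by (simp add: algebra_simps power2_eq_square power3_eq_cube)
qed

lemma sin_pi_lower: assumes "0 \<le> a" "a \<le> 1/2" shows "sin (pi * a) \<ge> 4/3 * a"
proof -
  have "pi * a - (pi * a)^3/6 \<le> sin (pi * a)" using assms by (intro sin_lower) simp
  moreover have "pi * a * (1 - pi^2/24) \<le> pi * a - (pi * a)^3/6"
  proof -
    have "a * a \<le> (1/2) * (1/2)" using assms by (intro mult_mono) auto
    hence "a^2 \<le> 1/4" by (simp add: power2_eq_square)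
    hence "pi^2 * a^2 \<le> pi^2 / 4" by (simp add: mult_left_mono)
    hence "1 - pi^2/24 \<le> 1 - pi^2 * a^2 / 6" by simp
    hence "pi * a * (1 - pi^2/24) \<le> pi * a * (1 - pi^2 * a^2 / 6)"
      using assms by (intro mult_left_mono) auto
    also have "\<dots> = pi * a - (pi * a)^3/6" by (simp add: algebra_simps power2_eq_square power3_eq_cube)
    finally show ?thesis .
  qed
  moreover have "4/3 * a \<le> pi * (1 - pi^2/24) * a" using pi_poly assms by (intro mult_right_mono) auto
  ultimately show ?thesis by (simp add: algebra_simps)
qed

lemma sin_sq_upper:
  assumes "0 \<le> x" "x \<le> 1"
  shows "(sin (pi * x))^2 \<le> 1 - 16/9 * (x - 1/2)^2"
proof -
  define u where "u = x - 1/2"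
  have "cos (pi * x) = cos (pi * u + pi/2)" by (simp add: u_def algebra_simps)
  also have "\<dots> = - sin (pi * u)" by (simp add: cos_add)
  finally have c: "(cos (pi * x))^2 = (sin (pi * \<bar>u\<bar>))^2"
    by (cases "u \<ge> 0") (auto simp: power2_eq_square)
  have "4/3 * \<bar>u\<bar> \<le> sin (pi * \<bar>u\<bar>)" using assms by (intro sin_pi_lower) (auto simp: u_def abs_if)
  hence "(4/3 * \<bar>u\<bar>)^2 \<le> (sin (pi * \<bar>u\<bar>))^2" by (intro power_mono) auto
  moreover have "(4/3 * \<bar>u\<bar>)^2 = 16/9 * u^2" unfolding power2_eq_square by (simp add: field_simps abs_mult_self_eq)
  ultimately have "16/9 * u^2 \<le> (cos (pi * x))^2" by (simp only: c)
  thus ?thesis unfolding u_def using sin_cos_squared_add[of "pi*x"] by linarith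
qed


lemma poly_ineq:
  fixes c u :: real
  assumes c: "c \<ge> 3/2" and u: "\<bar>u\<bar> \<le> 1/2"
  shows "(1 - 16/9 * u^2) * (1 / (c + u)^2 + 1 / (c - u)^2) \<le> 2 / c^2"
proof -
  define t where "t = u^2"
  have t0: "t \<ge> 0" by (simp add: t_def)
  have cp: "c + u > 0" "c - u > 0" using c u by auto
  have "c * c \<ge> 3/2 * (3/2)" using c by (intro mult_mono) auto
  hence c2: "c^2 \<ge> 9/4" by (simp add: power2_eq_square)
  have k: "c^2 * (16/9 * c^2 - 3) \<ge> 0" using c2 by (intro mult_nonneg_nonneg) auto
  have key: "(1 - 16/9 * t) * c^2 * 2 * (c^2 + t) \<le> 2 * (c^2 - t)^2"
  proof -
    have "2 * (c^2 - t)^2 - (1 - 16/9 * t) * c^2 * 2 * (c^2 + t) = 2 * (t * (c^2 * (16/9 * c^2 - 3)) + t^2 * (1 + 16/9 * c^2))"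
      by (simp add: algebra_simps power2_eq_square)
    also have "\<dots> \<ge> 0" using t0 k c2 by (intro mult_nonneg_nonneg add_nonneg_nonneg) auto
    finally show ?thesis by simp
  qed
  have e1: "(c + u)^2 * (c - u)^2 = (c^2 - t)^2" by (simp add: t_def algebra_simps power2_eq_square)
  have e2: "(c - u)^2 + (c + u)^2 = 2 * (c^2 + t)" by (simp add: t_def algebra_simps power2_eq_square)
  have p1: "(c + u)^2 > 0" "(c - u)^2 > 0" using cp by auto
  have "1 / (c + u)^2 + 1 / (c - u)^2 = ((c - u)^2 + (c + u)^2) / ((c + u)^2 * (c - u)^2)"
    using p1 by (simp add: field_simps)
  also have "\<dots> = 2 * (c^2 + t) / (c^2 - t)^2" by (simp only: e1 e2)
  finally have "(1 - 16/9 * u^2) * (1 / (c + u)^2 + 1 / (c - u)^2) = (1 - 16/9 * t) * (2 * (c^2 + t)) / (c^2 - t)^2"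
    by (simp add: t_def)
  also have "\<dots> \<le> 2 / c^2"
  proof -
    have pos: "(c^2 - t)^2 > 0" using p1 e1 by (metis mult_pos_pos)
    have cc: "c^2 > 0" using c by simp
    have "(1 - 16/9 * t) * (2 * (c^2 + t)) * c^2 \<le> 2 * (c^2 - t)^2"
    proof -
      have eqn: "(1 - 16/9 * t) * (2 * (c^2 + t)) * c^2 = (1 - 16/9 * t) * c^2 * 2 * (c^2 + t)" by (simp only: mult_ac)
      show ?thesis unfolding eqn by (rule key)
    qed
    thus ?thesis using pos cc by (simp add: divide_simps)
  qed
  finally show ?thesis .
qed
lemma s_termwise:
  assumes "0 \<le> x" "x \<le> 1" "m \<ge> 1"
  shows "s m x \<le> s m (1/2)"
proof -
  define c where "c = real m + 1/2"
  define u where "u = x - 1/2"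
  have F0: "0 \<le> 1 / (x + real m)^2 + 1 / (1 - x + real m)^2" by simp
  have "s m x = (sin (pi * x))^2 / pi^2 * (1 / (x + real m)^2 + 1 / (1 - x + real m)^2)"
    using assms by (intro s_formula) auto
  also have "\<dots> \<le> (1 - 16/9 * u^2) / pi^2 * (1 / (x + real m)^2 + 1 / (1 - x + real m)^2)"
    using sin_sq_upper[OF assms(1,2)] F0 unfolding u_def
    by (intro mult_right_mono divide_right_mono) auto
  also have "\<dots> = ((1 - 16/9 * u^2) * (1 / (c + u)^2 + 1 / (c - u)^2)) / pi^2"
    by (simp add: c_def u_def algebra_simps)
  also have "\<dots> \<le> (2 / c^2) / pi^2"
    using assms by (intro divide_right_mono poly_ineq) (auto simp: c_def u_def abs_if)
  also have "\<dots> = s m (1/2)"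
    by (simp add: s_half c_def field_simps power2_eq_square)
  finally show ?thesis .
qed



lemma tangent_powr:
  fixes a b r :: real
  assumes a: "a \<ge> 0" and b: "b > 0" and r: "r \<ge> 1"
  shows "r * b powr (r - 1) * (a - b) \<le> a powr r - b powr r"
proof -
  have bb: "b powr (r - 1) * b = b powr r"
    using b by (simp add: powr_diff)
  have d: "((\<lambda>z. z powr r) has_real_derivative r * z powr (r - 1)) (at z)" if "z > 0" for z
    using that by (rule has_real_derivative_powr)
  consider "a = 0" | "0 < a" "a < b" | "a = b" | "b < a" using a by linarith
  thus ?thesis
  proof cases
    case 1
    have "0 \<le> b powr r" by simp
    hence "b powr r \<le> r * b powr r" using r by (simp add: mult_le_cancel_right1)
    thus ?thesis using 1 r b bb by (simp add: algebra_simps)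
  next
    case 2
    obtain z where z: "a < z" "z < b" "b powr r - a powr r = (b - a) * (r * z powr (r - 1))"
      using MVT2[of a b "\<lambda>z. z powr r" "\<lambda>z. r * z powr (r - 1)"] 2 d by force
    have "z powr (r - 1) \<le> b powr (r - 1)" using z 2 r by (intro powr_mono2) auto
    hence "(b - a) * (r * z powr (r - 1)) \<le> (b - a) * (r * b powr (r - 1))"
      using 2 r by (intro mult_left_mono) auto
    thus ?thesis using z by (simp add: algebra_simps)
  next
    case 3 thus ?thesis by simp
  next
    case 4
    obtain z where z: "b < z" "z < a" "a powr r - b powr r = (a - b) * (r * z powr (r - 1))"
      using MVT2[of b a "\<lambda>z. z powr r" "\<lambda>z. r * z powr (r - 1)"] 4 b d by force
    have "b powr (r - 1) \<le> z powr (r - 1)" using z b r by (intro powr_mono2) auto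
    hence "(a - b) * (r * b powr (r - 1)) \<le> (a - b) * (r * z powr (r - 1))"
      using 4 r by (intro mult_left_mono) auto
    thus ?thesis using z by (simp add: algebra_simps)
  qed
qed

lemma powr_summable_aux:
  fixes a :: "nat \<Rightarrow> real" and r :: real
  assumes r: "r \<ge> 1" and a0: "\<And>m. a m \<ge> 0" and as: "a sums 1"
  shows "summable (\<lambda>m. a m powr r)"
proof (rule summable_comparison_test[where g = a])
  have le1: "a m \<le> 1" for m
  proof -
    have "sum a {m} \<le> suminf a"
      using as a0 by (intro sum_le_suminf) (auto simp: sums_iff)
    thus ?thesis using as by (simp add: sums_iff)
  qed
  show "\<exists>N. \<forall>n\<ge>N. norm (a n powr r) \<le> a n"
  proof (intro exI allI impI)
    fix n :: nat
    have "a n powr r \<le> a n powr 1" using r a0[of n] le1[of n] by (intro powr_mono') auto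
    thus "norm (a n powr r) \<le> a n" using a0[of n] by (simp add: powr_one)
  qed
  show "summable a" using as by (simp add: sums_iff)
qed

lemma majorization_aux:
  fixes a b :: "nat \<Rightarrow> real" and r :: real
  assumes r: "r \<ge> 1" and a0: "\<And>m. a m \<ge> 0" and b0: "\<And>m. b m > 0"
    and as: "a sums 1" and bs: "b sums 1"
    and ab: "\<And>m. m \<ge> 1 \<Longrightarrow> a m \<le> b m"
    and bdec: "\<And>m. b (Suc m) \<le> b m"
  shows "(\<Sum>m. b m powr r) \<le> (\<Sum>m. a m powr r)"
proof -
  define c where "c m = r * b m powr (r - 1)" for m
  define D where "D n = (\<Sum>m<n. a m - b m)" for n
  have c0: "c m \<ge> 0" for m using r by (simp add: c_def)
  have cdec: "c (Suc m) \<le> c m" for m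
    unfolding c_def using r bdec[of m] b0[of "Suc m"] by (intro mult_left_mono powr_mono2) auto
  have D0: "D n \<ge> 0" for n
  proof (cases "n = 0")
    case True thus ?thesis by (simp add: D_def)
  next
    case False
    have g: "summable (\<lambda>m. b m - a m)" using as bs by (intro summable_diff) (auto simp: sums_iff)
    have "(\<lambda>m. b m - a m) sums (1 - 1)" using as bs by (intro sums_diff)
    hence "suminf (\<lambda>m. b m - a m) = 0" by (simp add: sums_iff)
    with suminf_split_initial_segment[OF g, of n]
    have "0 = (\<Sum>i. b (i + n) - a (i + n)) + (\<Sum>i<n. b i - a i)" by simp
    moreover have "(\<Sum>i. b (i + n) - a (i + n)) \<ge> 0"
      using False ab summable_ignore_initial_segment[OF g, of n] by (intro suminf_nonneg) auto
    moreover have "D n = - (\<Sum>i<n. b i - a i)" by (simp add: D_def sum_negf[symmetric])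
    ultimately show ?thesis by linarith
  qed
  have abel: "(\<Sum>m<N. c m * (a m - b m)) \<ge> c N * D N" for N
  proof (induction N)
    case 0 thus ?case by (simp add: D_def)
  next
    case (Suc N)
    have "(\<Sum>m<Suc N. c m * (a m - b m)) = (\<Sum>m<N. c m * (a m - b m)) + c N * (a N - b N)" by simp
    also have "\<dots> \<ge> c N * D N + c N * (a N - b N)" using Suc by simp
    also have "c N * D N + c N * (a N - b N) = c N * D (Suc N)" by (simp add: D_def algebra_simps)
    also have "c N * D (Suc N) \<ge> c (Suc N) * D (Suc N)" using cdec D0 by (intro mult_right_mono) auto
    finally show ?case by simp
  qed
  have part: "(\<Sum>m<N. a m powr r - b m powr r) \<ge> 0" for N
  proof -
    have "0 \<le> c N * D N" using c0 D0 by simp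
    also have "\<dots> \<le> (\<Sum>m<N. c m * (a m - b m))" by (rule abel)
    also have "\<dots> \<le> (\<Sum>m<N. a m powr r - b m powr r)"
      unfolding c_def using a0 b0 r by (intro sum_mono tangent_powr) auto
    finally show ?thesis .
  qed
  have sa: "summable (\<lambda>m. a m powr r)" using powr_summable_aux[OF r a0 as] .
  have sb: "summable (\<lambda>m. b m powr r)" using powr_summable_aux[OF r _ bs] b0 less_imp_le by blast
  have "(\<lambda>m. a m powr r - b m powr r) sums ((\<Sum>m. a m powr r) - (\<Sum>m. b m powr r))"
    using sa sb by (intro sums_diff) (auto simp: summable_sums)
  hence "0 \<le> (\<Sum>m. a m powr r) - (\<Sum>m. b m powr r)"
    unfolding sums_def using part by (intro LIMSEQ_le_const) auto
  thus ?thesis by simp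
qed


theorem mainTheorem7:
  fixes r x :: real
  assumes "r \<ge> 1" and "0 \<le> x" and "x \<le> 1"
  shows "(\<forall>m. s m (1/2) = 8 / (pi\<^sup>2 * (2 * real m + 1)\<^sup>2))
     \<and> summable (\<lambda>m. s m x powr r)
     \<and> summable (\<lambda>m. s m (1/2) powr r)
     \<and> (\<Sum>m. s m x powr r) \<ge> (\<Sum>m. s m (1/2) powr r)"
proof -
  have b0: "s m (1/2) > 0" for m by (simp add: s_half)
  have bs: "(\<lambda>m. s m (1/2)) sums 1" by (rule s_sums_interior) auto
  have as: "(\<lambda>m. s m x) sums 1"
  proof (cases "x = 0 \<or> x = 1")
    case True
    hence "(\<lambda>m. s m x) = (\<lambda>m. if m = 0 then (\<lambda>_. 1::real) m else 0)"
      using s_endpoint by auto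
    thus ?thesis using sums_single[of 0 "\<lambda>_. 1::real"] by simp
  next
    case False
    thus ?thesis using assms by (intro s_sums_interior) auto
  qed
  have bdec: "s (Suc m) (1/2) \<le> s m (1/2)" for m
  proof -
    define A where "A = pi^2 * (2 * real m + 1)^2"
    define B where "B = pi^2 * (2 * real (Suc m) + 1)^2"
    have "(2 * real m + 1)^2 \<le> (2 * real (Suc m) + 1)^2"
      by (rule power_mono) auto
    hence AB: "A \<le> B" unfolding A_def B_def by (rule mult_left_mono) simp
    have A0: "A > 0" unfolding A_def by simp
    hence "8 / B \<le> 8 / A" using AB by (intro divide_left_mono) auto
    thus ?thesis unfolding s_half A_def B_def .
  qed
  have ab: "s m x \<le> s m (1/2)" if "m \<ge> 1" for m
    using assms that by (intro s_termwise) auto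
  show ?thesis
  proof (intro conjI allI)
    show "s m (1/2) = 8 / (pi\<^sup>2 * (2 * real m + 1)\<^sup>2)" for m by (rule s_half)
    show "summable (\<lambda>m. s m x powr r)"
      using powr_summable_aux[OF assms(1) s_nonneg as] .
    show "summable (\<lambda>m. s m (1/2) powr r)"
      using powr_summable_aux[OF assms(1) s_nonneg bs] .
    show "(\<Sum>m. s m x powr r) \<ge> (\<Sum>m. s m (1/2) powr r)"
      by (rule majorization_aux[OF assms(1) s_nonneg b0 as bs ab bdec])
  qed
qed

end
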